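(* Let $K$ be a valued field, $d\ge 1$ and $S\subseteq K^d$ convex. (1) If $0\in S$ and $S=\operatorname{conv}(Y)$ for some finite $Y$, then $S$ is generated as an $\mathcal{O}_K$-module by a finite $K$-linearly independent set of vectors. (2) If $L$ is a valued field extension of $K$ (i.e. $K\subseteq L$ and $\nu_L$ restricted to $K$ equals $\nu_K$), then $\operatorname{conv}_{L^d}(S)\cap K^d=S$, where $\operatorname{conv}_{L^d}(S)$ denotes the convex hull of $S$ computed in $L^d$ with respect to $\mathcal{O}_L$.
   Context: For a valued field $F$ with valuation $\nu_F$, $\mathcal{O}_F=\{x\in F:\nu_F(x)\ge0\}$. A set $X\subseteq F^d$ is convex (over $F$) if it is closed under combinations $\sum_{i=1}^n\alpha_ix_i$ with $x_i\in X$, $\alpha_i\in\mathcal{O}_F$, $\sum\alpha_i=1$; $\operatorname{conv}$ denotes the smallest convex superset, i.e. the set of all such combinations. *)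

theory Defs
  imports "HOL-Analysis.Analysis"
begin

text \<open>Valuations: \<nu> : F \<rightarrow> \<Gamma> \<union> {\<infinity>}, with \<Gamma> an ordered abelian group;
  the value \<infinity> is represented by None.\<close>

definition vge :: "'g::linordered_ab_group_add option \<Rightarrow> 'g option \<Rightarrow> bool" where
  "vge a b \<longleftrightarrow> a = None \<or> (b \<noteq> None \<and> the b \<le> the a)"

definition valuation :: "('a::field \<Rightarrow> 'g::linordered_ab_group_add option) \<Rightarrow> bool" where
  "valuation v \<longleftrightarrow>
     (\<forall>x. v x = None \<longleftrightarrow> x = 0) \<and>
     (\<forall>x y. x \<noteq> 0 \<longrightarrow> y \<noteq> 0 \<longrightarrow> v (x * y) = Some (the (v x) + the (v y))) \<and>
     (\<forall>x y. vge (v (x + y)) (v x) \<or> vge (v (x + y)) (v y))"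

definition vring :: "('a::field \<Rightarrow> 'g::linordered_ab_group_add option) \<Rightarrow> 'a set" where
  "vring v = {x. vge (v x) (Some 0)}"

definition vconv :: "('a::field \<Rightarrow> 'g::linordered_ab_group_add option) \<Rightarrow> ('a^'n) set \<Rightarrow> ('a^'n) set" where
  "vconv v X = {y. \<exists>(m::nat) (x::nat \<Rightarrow> 'a^'n) (\<alpha>::nat \<Rightarrow> 'a).
      (\<forall>i<m. x i \<in> X \<and> \<alpha> i \<in> vring v) \<and> (\<Sum>i<m. \<alpha> i) = 1 \<and> y = (\<Sum>i<m. \<alpha> i *s x i)}"

definition vconvex :: "('a::field \<Rightarrow> 'g::linordered_ab_group_add option) \<Rightarrow> ('a^'n) set \<Rightarrow> bool" where
  "vconvex v X \<longleftrightarrow> (\<forall>y \<in> vconv v X. y \<in> X)"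

definition vring_span :: "('a::field \<Rightarrow> 'g::linordered_ab_group_add option) \<Rightarrow> ('a^'n) set \<Rightarrow> ('a^'n) set" where
  "vring_span v B = {y. \<exists>c. (\<forall>b\<in>B. c b \<in> vring v) \<and> y = (\<Sum>b\<in>B. c b *s b)}"

definition vmap :: "('a \<Rightarrow> 'b) \<Rightarrow> 'a^'n \<Rightarrow> 'b^'n" where
  "vmap f x = (\<chi> i. f (x $ i))"

end

theory Submission
  imports Defs
begin

lemma vge_trans0: "vge a b \<Longrightarrow> vge b (Some 0) \<Longrightarrow> vge a (Some 0)"
  unfolding vge_def by auto

lemma lo_double0: "(a::'g::linordered_ab_group_add) + a = 0 \<Longrightarrow> a = 0"
proof (rule ccontr)
  assume h: "a + a = 0" "a \<noteq> 0"
  show False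
  proof (cases "a < 0")
    case True thus False using add_neg_neg[OF True True] h by simp
  next
    case False hence "a > 0" using h by simp
    thus False using add_pos_pos[of a a] h by simp
  qed
qed

context fixes v :: "'a::field \<Rightarrow> 'g::linordered_ab_group_add option"
  assumes v: "valuation v"
begin

lemma v0: "v 0 = None" using v unfolding valuation_def by auto
lemma vnz: "x \<noteq> 0 \<Longrightarrow> v x = Some (the (v x))" using v unfolding valuation_def by auto
lemma vmult: "x \<noteq> 0 \<Longrightarrow> y \<noteq> 0 \<Longrightarrow> v (x*y) = Some (the (v x) + the (v y))"
  using v unfolding valuation_def by auto
lemma v1: "v 1 = Some 0"
proof -
  have "v 1 = Some (the (v 1) + the (v 1))" using vmult[of 1 1] by simp
  moreover have "v 1 = Some (the (v 1))" using vnz[of 1] by simp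
  ultimately have "the (v 1) + the (v 1) = the (v 1)" by (metis option.sel)
  hence "the (v 1) = 0" by (metis add_cancel_right_right)
  thus ?thesis using vnz[of 1] by simp
qed
lemma vm1: "v (-1) = Some 0"
proof -
  have "v 1 = Some (the (v (-1)) + the (v (-1)))" using vmult[of "-1" "-1"] by simp
  hence "the (v (-1)) = 0" using v1 lo_double0 by auto
  thus ?thesis using vnz[of "-1"] by simp
qed
lemma vneg: "v (-x) = v x"
proof (cases "x = 0")
  case True thus ?thesis by simp
next
  case False
  have "v (-1 * x) = Some (the (v (-1)) + the (v x))" using vmult[of "-1" x] False by simp
  thus ?thesis using vm1 vnz[OF False] by simp
qed
lemma vinv: "x \<noteq> 0 \<Longrightarrow> the (v (inverse x)) = - the (v x)"
proof -
  assume x: "x \<noteq> 0"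
  have "v (x * inverse x) = Some (the (v x) + the (v (inverse x)))" using vmult[of x "inverse x"] x by simp
  hence "the (v x) + the (v (inverse x)) = 0" using v1 x by simp
  thus ?thesis by (simp add: eq_neg_iff_add_eq_0 add.commute)
qed

lemma vring_mult: "x \<in> vring v \<Longrightarrow> y \<in> vring v \<Longrightarrow> x * y \<in> vring v"
proof (cases "x = 0 \<or> y = 0")
  case True thus ?thesis using v0 unfolding vring_def vge_def by auto
next
  case False
  assume "x \<in> vring v" "y \<in> vring v"
  hence "0 \<le> the (v x)" "0 \<le> the (v y)" using False v unfolding vring_def vge_def valuation_def
    by auto
  thus ?thesis using vmult[of x y] False unfolding vring_def vge_def by simp
qed
lemma vring_neg: "x \<in> vring v \<Longrightarrow> - x \<in> vring v"
  unfolding vring_def using vneg by simp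
lemma vring_add: "x \<in> vring v \<Longrightarrow> y \<in> vring v \<Longrightarrow> x + y \<in> vring v"
proof -
  assume "x \<in> vring v" "y \<in> vring v"
  hence h: "vge (v x) (Some 0)" "vge (v y) (Some 0)" unfolding vring_def by auto
  have "vge (v (x + y)) (v x) \<or> vge (v (x + y)) (v y)" using v unfolding valuation_def by blast
  thus ?thesis using h vge_trans0 unfolding vring_def by blast
qed
lemma vring_diff: "x \<in> vring v \<Longrightarrow> y \<in> vring v \<Longrightarrow> x - y \<in> vring v"
  using vring_add[of x "-y"] vring_neg by simp
lemma vring_1: "1 \<in> vring v" unfolding vring_def vge_def using v1 by simp
lemma vring_0: "0 \<in> vring v" unfolding vring_def vge_def using v0 by simp
lemma vring_div: "a \<noteq> 0 \<Longrightarrow> b \<noteq> 0 \<Longrightarrow> the (v b) \<le> the (v a) \<Longrightarrow> a / b \<in> vring v"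
proof -
  assume a: "a \<noteq> 0" and b: "b \<noteq> 0" and le: "the (v b) \<le> the (v a)"
  have "v (a * inverse b) = Some (the (v a) - the (v b))"
    using vmult[of a "inverse b"] a b vinv[OF b] by simp
  thus ?thesis using le unfolding vring_def vge_def by (simp add: divide_inverse)
qed

end

lemma linear_repr:
  assumes "Vector_Spaces.linear (*s) (*) (g :: 'a::field^'n \<Rightarrow> 'a)"
  shows "g w = (\<Sum>k\<in>UNIV. w$k * g (axis k 1))"
proof -
  interpret Vector_Spaces.linear "(*s)" "(*)" g by fact
  have "g w = g (\<Sum>k\<in>UNIV. w$k *s axis k 1)" by (simp add: basis_expansion)
  also have "\<dots> = (\<Sum>k\<in>UNIV. w$k * g (axis k 1))" by (simp add: sum scale)
  finally show ?thesis .
qed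

lemma dual_exists:
  assumes "vec.independent (B :: ('a::field^'n) set)" "b \<in> B"
  shows "\<exists>g. Vector_Spaces.linear (*s) (*) g \<and> (\<forall>x\<in>B. g x = (if x = b then 1 else (0::'a)))"
proof -
  interpret vector_space_pair "(*s) :: 'a \<Rightarrow> 'a^'n \<Rightarrow> _" "(*) :: 'a \<Rightarrow> 'a \<Rightarrow> 'a"
    by unfold_locales
  show ?thesis using linear_independent_extend[OF assms(1), of "\<lambda>x. if x = b then 1 else 0"] by blast
qed


definition hat :: "'a::field^'n \<Rightarrow> 'a^('n + unit)" where
  "hat s = (\<chi> j. case j of Inl k \<Rightarrow> s$k | Inr _ \<Rightarrow> 1)"

lemma hat_Inl[simp]: "hat s $ Inl k = s $ k" by (simp add: hat_def)
lemma hat_Inr[simp]: "hat s $ Inr u = 1" by (simp add: hat_def)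

context
  fixes vK :: "'k::field \<Rightarrow> 'g::linordered_ab_group_add option"
    and vL :: "'l::field \<Rightarrow> 'g option"
    and \<iota> :: "'k \<Rightarrow> 'l"
  assumes vK: "valuation vK" and vL: "valuation vL"
    and i1: "\<iota> 1 = 1" and iadd: "\<And>x y. \<iota> (x + y) = \<iota> x + \<iota> y"
    and imul: "\<And>x y. \<iota> (x * y) = \<iota> x * \<iota> y" and iv: "\<And>x. vL (\<iota> x) = vK x"
begin

lemma i0: "\<iota> 0 = 0"
  using iadd[of 0 0] by (metis add.right_neutral add_left_cancel)

lemma isub: "\<iota> (a - b) = \<iota> a - \<iota> b"
  using iadd[of "a - b" b] by (simp add: algebra_simps)

lemma isum: "\<iota> (sum f A) = (\<Sum>x\<in>A. \<iota> (f x))"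
  by (induction A rule: infinite_finite_induct) (auto simp: i0 iadd)

lemma iinj: "\<iota> a = \<iota> b \<Longrightarrow> a = b"
proof -
  assume "\<iota> a = \<iota> b"
  hence "\<iota> (a - b) = 0" by (simp add: isub)
  hence "vK (a - b) = None" using iv[of "a-b"] v0[OF vL] by simp
  thus "a = b" using vK unfolding valuation_def by auto
qed

lemma inz: "a \<noteq> 0 \<Longrightarrow> \<iota> a \<noteq> 0"
  using iinj i0 by metis

lemma red:
  assumes "finite I" "\<forall>i\<in>I. \<alpha> i \<in> vring vL" "sum \<alpha> I = 1"
    "\<forall>k. \<iota> (x$k) = (\<Sum>i\<in>I. \<alpha> i * \<iota> (s i $ k))"
  shows "\<exists>\<beta>. (\<forall>i\<in>I. \<beta> i \<in> vring vK) \<and> sum \<beta> I = 1 \<and> (\<forall>k. x$k = (\<Sum>i\<in>I. \<beta> i * s i $ k))"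
  using assms
proof (induction I arbitrary: \<alpha> rule: finite_psubset_induct)
  case (psubset I \<alpha>)
  show ?case
  proof (cases "\<exists>\<gamma>. (\<exists>i\<in>I. \<gamma> i \<noteq> 0) \<and> sum \<gamma> I = 0 \<and> (\<forall>k. (\<Sum>i\<in>I. \<gamma> i * s i $ k) = 0)")
    case True
    then obtain \<gamma> where g1: "\<exists>i\<in>I. \<gamma> i \<noteq> 0" and g2: "sum \<gamma> I = 0"
      and g3: "\<forall>k. (\<Sum>i\<in>I. \<gamma> i * s i $ k) = 0" by blast
    define J where "J = {i\<in>I. \<gamma> i \<noteq> 0}"
    have fJ: "finite J" "J \<noteq> {}" using psubset g1 by (auto simp: J_def)
    define m where "m = Min ((\<lambda>i. the (vK (\<gamma> i))) ` J)"
    have "m \<in> (\<lambda>i. the (vK (\<gamma> i))) ` J"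
      using Min_in[of "(\<lambda>i. the (vK (\<gamma> i))) ` J"] fJ unfolding m_def by auto
    then obtain j where j: "j \<in> J" "the (vK (\<gamma> j)) = m" by auto
    have jmin: "\<forall>i\<in>J. the (vK (\<gamma> j)) \<le> the (vK (\<gamma> i))" using j fJ m_def by (auto intro: Min_le)
    have jI: "j \<in> I" "\<gamma> j \<noteq> 0" using j by (auto simp: J_def)
    have igj: "\<iota> (\<gamma> j) \<noteq> 0" using jI inz by auto
    define t where "t = \<alpha> j / \<iota> (\<gamma> j)"
    define \<alpha>' where "\<alpha>' i = \<alpha> i - t * \<iota> (\<gamma> i)" for i
    have a'j: "\<alpha>' j = 0" using igj by (simp add: \<alpha>'_def t_def)
    have a'O: "\<forall>i\<in>I - {j}. \<alpha>' i \<in> vring vL"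
    proof
      fix i assume i: "i \<in> I - {j}"
      show "\<alpha>' i \<in> vring vL"
      proof (cases "\<gamma> i = 0 \<or> \<alpha> j = 0")
        case True thus ?thesis using i psubset.prems(1) by (auto simp: \<alpha>'_def t_def i0)
      next
        case False
        have iJ: "i \<in> J" using i False by (auto simp: J_def)
        have "\<iota> (\<gamma> i) / \<iota> (\<gamma> j) \<in> vring vL"
          apply (rule vring_div[OF vL])
          using False igj inz iv jmin iJ by auto
        then have "\<alpha> j * (\<iota> (\<gamma> i) / \<iota> (\<gamma> j)) \<in> vring vL"
          using vring_mult[OF vL] psubset.prems(1) jI by blast
        moreover have "t * \<iota> (\<gamma> i) = \<alpha> j * (\<iota> (\<gamma> i) / \<iota> (\<gamma> j))" by (simp add: t_def)
        ultimately show ?thesis using vring_diff[OF vL] psubset.prems(1) i unfolding \<alpha>'_def by auto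
      qed
    qed
    have "sum \<alpha>' I = sum \<alpha> I - t * \<iota> (sum \<gamma> I)"
      by (simp add: \<alpha>'_def sum_subtractf sum_distrib_left isum)
    hence "sum \<alpha>' I = 1" using g2 i0 psubset.prems(2) by simp
    hence s1: "sum \<alpha>' (I - {j}) = 1" using sum.remove[OF psubset.hyps jI(1), of \<alpha>'] a'j by simp
    have c1: "\<forall>k. \<iota> (x$k) = (\<Sum>i\<in>I - {j}. \<alpha>' i * \<iota> (s i $ k))"
    proof
      fix k
      have "(\<Sum>i\<in>I. \<alpha>' i * \<iota> (s i $ k)) = (\<Sum>i\<in>I. \<alpha> i * \<iota> (s i $ k)) - t * \<iota> (\<Sum>i\<in>I. \<gamma> i * s i $ k)"
        by (simp add: \<alpha>'_def sum_subtractf sum_distrib_left isum imul algebra_simps)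
      also have "\<dots> = \<iota> (x$k)" using g3 i0 psubset.prems(3) by simp
      finally show "\<iota> (x$k) = (\<Sum>i\<in>I - {j}. \<alpha>' i * \<iota> (s i $ k))"
        using sum.remove[OF psubset.hyps jI(1), of "\<lambda>i. \<alpha>' i * \<iota> (s i $ k)"] a'j by simp
    qed
    have "I - {j} \<subset> I" using jI by auto
    from psubset.IH[OF this a'O s1 c1] obtain \<beta> where
      b1: "\<forall>i\<in>I - {j}. \<beta> i \<in> vring vK" and b2: "sum \<beta> (I - {j}) = 1"
      and b3: "\<forall>k. x$k = (\<Sum>i\<in>I - {j}. \<beta> i * s i $ k)" by blast
    define \<beta>' where "\<beta>' = \<beta>(j := 0)"
    have e1: "sum \<beta>' I = sum \<beta> (I - {j})"
      using sum.remove[OF psubset.hyps jI(1), of \<beta>'] by (simp add: \<beta>'_def)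
    have e2: "(\<Sum>i\<in>I. \<beta>' i * s i $ k) = (\<Sum>i\<in>I - {j}. \<beta> i * s i $ k)" for k
      using sum.remove[OF psubset.hyps jI(1), of "\<lambda>i. \<beta>' i * s i $ k"] by (simp add: \<beta>'_def)
    show ?thesis
      apply (rule exI[of _ \<beta>'])
      using b1 b2 b3 e1 e2 vring_0[OF vK] by (auto simp: \<beta>'_def)
  next
    case False
    define w where "w i = hat (s i)" for i
    have injw: "inj_on w I"
    proof (rule inj_onI, rule ccontr)
      fix i i' assume ii: "i \<in> I" "i' \<in> I" "w i = w i'" "i \<noteq> i'"
      have ss: "s i $ k = s i' $ k" for k using ii(3) unfolding w_def
        by (metis hat_Inl)
      define \<gamma> where "\<gamma> l = (if l = i then 1 else 0) - (if l = i' then 1 else (0::'k))" for l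
      have "sum \<gamma> I = 0" using ii psubset.hyps by (simp add: \<gamma>_def sum_subtractf)
      moreover have "(\<Sum>l\<in>I. \<gamma> l * s l $ k) = 0" for k
      proof -
        have "(\<Sum>l\<in>I. \<gamma> l * s l $ k) = (\<Sum>l\<in>I. (if l = i then s i $ k else 0) - (if l = i' then s i' $ k else 0))"
          by (rule sum.cong) (auto simp: \<gamma>_def)
        thus ?thesis using ii ss psubset.hyps by (simp add: sum_subtractf)
      qed
      moreover have "\<gamma> i \<noteq> 0" using ii by (simp add: \<gamma>_def)
      ultimately show False using False ii by blast
    qed
    have indep: "vec.independent (w ` I)"
    proof
      assume "vec.dependent (w ` I)"
      then obtain u where u1: "\<exists>v\<in>w ` I. u v \<noteq> 0" and u2: "(\<Sum>v\<in>w ` I. u v *s v) = 0"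
        using vec.dependent_finite[of "w ` I"] psubset.hyps by auto
      have u3: "(\<Sum>i\<in>I. u (w i) *s w i) = 0" using u2 sum.reindex[OF injw, of "\<lambda>v. u v *s v"] by simp
      have "sum (\<lambda>i. u (w i)) I = 0"
        using arg_cong[OF u3, of "\<lambda>z. z $ Inr ()"] by (simp add: w_def)
      moreover have "(\<Sum>i\<in>I. u (w i) * s i $ k) = 0" for k
        using arg_cong[OF u3, of "\<lambda>z. z $ Inl k"] by (simp add: w_def)
      moreover have "\<exists>i\<in>I. u (w i) \<noteq> 0" using u1 by auto
      ultimately have "\<exists>\<gamma>. (\<exists>i\<in>I. \<gamma> i \<noteq> 0) \<and> sum \<gamma> I = 0 \<and> (\<forall>k. (\<Sum>i\<in>I. \<gamma> i * s i $ k) = 0)"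
        by (intro exI[of _ "\<lambda>i. u (w i)"]) blast
      thus False using False by blast
    qed
    have "\<forall>j\<in>I. \<exists>g. Vector_Spaces.linear (*s) (*) g \<and> (\<forall>i\<in>I. g (w i) = (if i = j then 1 else 0))"
    proof
      fix j assume j: "j \<in> I"
      obtain g where g: "Vector_Spaces.linear (*s) (*) g" "\<forall>z\<in>w ` I. g z = (if z = w j then 1 else 0)"
        using dual_exists[OF indep, of "w j"] j by blast
      have "\<forall>i\<in>I. g (w i) = (if i = j then 1 else 0)"
        using g(2) injw j by (auto simp: inj_on_eq_iff)
      thus "\<exists>g. Vector_Spaces.linear (*s) (*) g \<and> (\<forall>i\<in>I. g (w i) = (if i = j then 1 else 0))"
        using g(1) by blast
    qed
    then obtain G where G: "\<forall>j\<in>I. Vector_Spaces.linear (*s) (*) (G j) \<and> (\<forall>i\<in>I. G j (w i) = (if i = j then 1 else 0))"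
      by metis
    have hx: "\<iota> (hat x $ k) = (\<Sum>i\<in>I. \<alpha> i * \<iota> (w i $ k))" for k
    proof (cases k)
      case (Inl k') thus ?thesis using psubset.prems(3) by (simp add: w_def)
    next
      case (Inr u) thus ?thesis using psubset.prems(2) i1 by (simp add: w_def)
    qed
    define \<beta> where "\<beta> j = G j (hat x)" for j
    have key: "\<iota> (\<beta> j) = \<alpha> j" if j: "j \<in> I" for j
    proof -
      have lin: "Vector_Spaces.linear (*s) (*) (G j)" using G j by blast
      have r: "G j z = (\<Sum>k\<in>UNIV. z$k * G j (axis k 1))" for z using linear_repr[OF lin] .
      have "\<iota> (\<beta> j) = (\<Sum>k\<in>UNIV. \<iota> (hat x $ k) * \<iota> (G j (axis k 1)))"
        unfolding \<beta>_def by (subst r) (simp only: isum imul)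
      also have "\<dots> = (\<Sum>k\<in>UNIV. \<Sum>i\<in>I. \<alpha> i * (\<iota> (w i $ k) * \<iota> (G j (axis k 1))))"
        by (simp only: hx sum_distrib_right mult.assoc)
      also have "\<dots> = (\<Sum>i\<in>I. \<alpha> i * (\<Sum>k\<in>UNIV. \<iota> (w i $ k) * \<iota> (G j (axis k 1))))"
        by (simp only: sum_distrib_left) (rule sum.swap)
      also have "\<dots> = (\<Sum>i\<in>I. \<alpha> i * \<iota> (G j (w i)))"
        apply (rule sum.cong[OF refl])
        subgoal for i by (subst r[of "w i"]) (simp only: isum imul)
        done
      also have "\<dots> = (\<Sum>i\<in>I. \<alpha> i * (if i = j then 1 else 0))"
        using G j i0 i1 by (intro sum.cong) auto
      also have "\<dots> = \<alpha> j" using j psubset.hyps by (simp add: if_distrib cong: if_cong)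
      finally show ?thesis .
    qed
    show ?thesis
    proof (intro exI[of _ \<beta>] conjI ballI allI)
      fix i assume "i \<in> I"
      hence "vK (\<beta> i) = vL (\<alpha> i)" using key iv by metis
      thus "\<beta> i \<in> vring vK" using \<open>i \<in> I\<close> psubset.prems(1) unfolding vring_def by simp
    next
      have "\<iota> (sum \<beta> I) = \<iota> 1" using key psubset.prems(2) i1 by (simp add: isum)
      thus "sum \<beta> I = 1" by (rule iinj)
    next
      fix k
      have "\<iota> (x$k) = \<iota> (\<Sum>i\<in>I. \<beta> i * s i $ k)"
        using psubset.prems(3) key by (simp add: isum imul)
      thus "x$k = (\<Sum>i\<in>I. \<beta> i * s i $ k)" by (rule iinj)
    qed
  qed
qed

end


context fixes v :: "'a::field \<Rightarrow> 'g::linordered_ab_group_add option"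
  assumes v: "valuation v"
begin

lemma span_reduce:
  assumes "finite (Y :: ('a^'n) set)"
  shows "\<exists>B. finite B \<and> vec.independent B \<and> vring_span v B = vring_span v Y"
  using assms
proof (induction Y rule: finite_psubset_induct)
  case (psubset Y)
  show ?case
  proof (cases "vec.dependent Y")
    case False thus ?thesis using psubset.hyps by blast
  next
    case True
    then obtain u where u1: "\<exists>y\<in>Y. u y \<noteq> 0" and u2: "(\<Sum>y\<in>Y. u y *s y) = 0"
      using vec.dependent_finite[OF psubset.hyps] by auto
    define J where "J = {y\<in>Y. u y \<noteq> 0}"
    have fJ: "finite J" "J \<noteq> {}" using psubset.hyps u1 by (auto simp: J_def)
    define m where "m = Min ((\<lambda>i. the (v (u i))) ` J)"
    have "m \<in> (\<lambda>i. the (v (u i))) ` J"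
      using Min_in[of "(\<lambda>i. the (v (u i))) ` J"] fJ unfolding m_def by auto
    then obtain y0 where j: "y0 \<in> J" "the (v (u y0)) = m" by auto
    have jmin: "\<forall>i\<in>J. the (v (u y0)) \<le> the (v (u i))" using j fJ m_def by (auto intro: Min_le)
    have y0: "y0 \<in> Y" "u y0 \<noteq> 0" using j by (auto simp: J_def)
    have dep: "(\<Sum>b\<in>Y - {y0}. u b * b $ k) = - (u y0 * y0 $ k)" for k
    proof -
      have "(\<Sum>b\<in>Y. u b * b $ k) = 0" using arg_cong[OF u2, of "\<lambda>z. z $ k"] by simp
      hence h: "u y0 * y0 $ k + (\<Sum>b\<in>Y - {y0}. u b * b $ k) = 0"
        using sum.remove[OF psubset.hyps y0(1), of "\<lambda>b. u b * b $ k"] by simp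
      show ?thesis using h by (metis add_eq_0_iff)
    qed
    have eq: "vring_span v (Y - {y0}) = vring_span v Y"
    proof
      show "vring_span v (Y - {y0}) \<subseteq> vring_span v Y"
      proof
        fix y assume "y \<in> vring_span v (Y - {y0})"
        then obtain c where c1: "\<forall>b\<in>Y - {y0}. c b \<in> vring v" and c2: "y = (\<Sum>b\<in>Y - {y0}. c b *s b)"
          unfolding vring_span_def by auto
        define c' where "c' = c(y0 := 0)"
        have "(\<Sum>b\<in>Y. c' b *s b) = (\<Sum>b\<in>Y - {y0}. c' b *s b)"
          using sum.remove[OF psubset.hyps y0(1), of "\<lambda>b. c' b *s b"] by (simp add: c'_def)
        also have "\<dots> = y" unfolding c2 by (rule sum.cong) (auto simp: c'_def)
        finally show "y \<in> vring_span v Y" unfolding vring_span_def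
          using c1 vring_0[OF v] by (auto simp: c'_def intro!: exI[of _ c'])
      qed
    next
      show "vring_span v Y \<subseteq> vring_span v (Y - {y0})"
      proof
        fix y assume "y \<in> vring_span v Y"
        then obtain c where c1: "\<forall>b\<in>Y. c b \<in> vring v" and c2: "y = (\<Sum>b\<in>Y. c b *s b)"
          unfolding vring_span_def by auto
        define c' where "c' b = c b - c y0 * (u b / u y0)" for b
        have c'O: "\<forall>b\<in>Y - {y0}. c' b \<in> vring v"
        proof
          fix b assume b: "b \<in> Y - {y0}"
          show "c' b \<in> vring v"
          proof (cases "u b = 0")
            case True thus ?thesis using c1 b by (simp add: c'_def)
          next
            case False
            have "u b / u y0 \<in> vring v"
              apply (rule vring_div[OF v]) using False y0 jmin b by (auto simp: J_def)
            hence "c y0 * (u b / u y0) \<in> vring v" using c1 y0 vring_mult[OF v] by blast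
            thus ?thesis unfolding c'_def using c1 b vring_diff[OF v] by blast
          qed
        qed
        have "y = (\<Sum>b\<in>Y - {y0}. c' b *s b)"
        proof (subst vec_eq_iff, rule allI)
          fix k
          have "(\<Sum>b\<in>Y - {y0}. c' b *s b) $ k = (\<Sum>b\<in>Y - {y0}. c b * b $ k) - (c y0 / u y0) * (\<Sum>b\<in>Y - {y0}. u b * b $ k)"
            by (simp add: c'_def sum_subtractf sum_distrib_left left_diff_distrib algebra_simps)
          also have "\<dots> = (\<Sum>b\<in>Y - {y0}. c b * b $ k) + c y0 * y0 $ k" using dep y0 by simp
          also have "\<dots> = y $ k" using c2 sum.remove[OF psubset.hyps y0(1), of "\<lambda>b. c b * b $ k"] by simp
          finally show "y $ k = (\<Sum>b\<in>Y - {y0}. c' b *s b) $ k" by simp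
        qed
        thus "y \<in> vring_span v (Y - {y0})" unfolding vring_span_def using c'O by blast
      qed
    qed
    have "Y - {y0} \<subset> Y" using y0 by auto
    from psubset.IH[OF this] eq show ?thesis by auto
  qed
qed

lemma conv_step:
  fixes S :: "('a^'n) set"
  assumes "vconvex v S" "0 \<in> S" "z \<in> S" "y \<in> S" "a \<in> vring v"
  shows "z + a *s y \<in> S"
proof -
  define x :: "nat \<Rightarrow> 'a^'n" where "x i = (if i = 0 then z else if i = 1 then y else 0)" for i
  define \<alpha> :: "nat \<Rightarrow> 'a" where "\<alpha> i = (if i = 0 then 1 else if i = 1 then a else - a)" for i
  have "\<forall>i<3. x i \<in> S \<and> \<alpha> i \<in> vring v"
    using assms vring_1[OF v] vring_neg[OF v] by (auto simp: x_def \<alpha>_def numeral_3_eq_3 less_Suc_eq)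
  moreover have "(\<Sum>i<3. \<alpha> i) = 1" by (simp add: \<alpha>_def numeral_3_eq_3)
  moreover have "z + a *s y = (\<Sum>i<3. \<alpha> i *s x i)" by (simp add: \<alpha>_def x_def numeral_3_eq_3)
  ultimately have "z + a *s y \<in> vconv v S" unfolding vconv_def by blast
  thus ?thesis using assms(1) unfolding vconvex_def by blast
qed

lemma span_sub:
  assumes "vconvex v S" "0 \<in> S" "Y \<subseteq> S" "finite Y"
  shows "vring_span v Y \<subseteq> S"
proof
  fix y assume "y \<in> vring_span v Y"
  then obtain c where c1: "\<forall>b\<in>Y. c b \<in> vring v" and c2: "y = (\<Sum>b\<in>Y. c b *s b)"
    unfolding vring_span_def by auto
  have "A \<subseteq> Y \<Longrightarrow> (\<Sum>b\<in>A. c b *s b) \<in> S" for A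
    using finite_subset[OF _ assms(4), of A]
  proof (induction A rule: infinite_finite_induct)
    case (infinite A) thus ?case by auto
  next
    case empty thus ?case using assms(2) by simp
  next
    case (insert b A)
    thus ?case using conv_step[OF assms(1,2), of "(\<Sum>b\<in>A. c b *s b)" b "c b"] c1 assms(3)
      by (auto simp: add.commute)
  qed
  thus "y \<in> S" using c2 by simp
qed

lemma span_add:
  assumes "finite Y" "z \<in> vring_span v Y" "y \<in> Y" "a \<in> vring v"
  shows "z + a *s y \<in> vring_span v Y"
proof -
  obtain c where c1: "\<forall>b\<in>Y. c b \<in> vring v" and c2: "z = (\<Sum>b\<in>Y. c b *s b)"
    using assms(2) unfolding vring_span_def by auto
  define c' where "c' b = c b + (if b = y then a else 0)" for b
  have "(\<Sum>b\<in>Y. c' b *s b) = z + a *s y"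
  proof (subst vec_eq_iff, rule allI)
    fix k
    have "(\<Sum>b\<in>Y. c' b *s b) $ k = (\<Sum>b\<in>Y. c b * b $ k + (if b = y then a * b $ k else 0))"
      unfolding sum_component by (rule sum.cong) (auto simp: c'_def distrib_right)
    also have "\<dots> = (\<Sum>b\<in>Y. c b * b $ k) + (\<Sum>b\<in>Y. (if b = y then a * b $ k else 0))"
      by (rule sum.distrib)
    also have "\<dots> = (z + a *s y) $ k" using assms(1,3) c2 by simp
    finally show "(\<Sum>b\<in>Y. c' b *s b) $ k = (z + a *s y) $ k" .
  qed
  moreover have "\<forall>b\<in>Y. c' b \<in> vring v" using c1 assms(4) vring_add[OF v] vring_0[OF v]
    by (auto simp: c'_def)
  ultimately show ?thesis unfolding vring_span_def by force
qed

lemma conv_sub_span: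
  fixes Y :: "('a^'n) set"
  assumes "finite Y"
  shows "vconv v Y \<subseteq> vring_span v Y"
proof
  fix y assume "y \<in> vconv v Y"
  then obtain m :: nat and x \<alpha> where h: "\<forall>i<m. x i \<in> Y \<and> \<alpha> i \<in> vring v" and y: "y = (\<Sum>i<m. \<alpha> i *s x i)"
    unfolding vconv_def mem_Collect_eq by blast
  have "\<forall>i<n. x i \<in> Y \<and> \<alpha> i \<in> vring v \<Longrightarrow> (\<Sum>i<n. \<alpha> i *s x i) \<in> vring_span v Y" for n
  proof (induction n)
    case 0
    have "(0::'a^'n) = (\<Sum>b\<in>Y. 0 *s b)" by simp
    thus ?case unfolding vring_span_def using vring_0[OF v] by (auto intro!: exI[of _ "\<lambda>_. 0"])
  next
    case (Suc n)
    thus ?case using span_add[OF assms, of "\<Sum>i<n. \<alpha> i *s x i" "x n" "\<alpha> n"] by simp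
  qed
  thus "y \<in> vring_span v Y" using h y by blast
qed

end


lemma vconv_intro:
  "(\<forall>i<(m::nat). x i \<in> X \<and> \<alpha> i \<in> vring v) \<Longrightarrow> (\<Sum>i<m. \<alpha> i) = 1 \<Longrightarrow> y = (\<Sum>i<m. \<alpha> i *s x i) \<Longrightarrow> y \<in> vconv v X"
  unfolding vconv_def mem_Collect_eq by blast

lemma vconv_single: "y \<in> X \<Longrightarrow> 1 \<in> vring v \<Longrightarrow> y \<in> vconv v X"
  by (rule vconv_intro[of "1::nat" "\<lambda>_. y" X "\<lambda>_. 1"]) auto

lemma vmap_comp[simp]: "vmap f x $ k = f (x $ k)" by (simp add: vmap_def)

theorem lemma4p2:
  fixes vK :: "'k::field \<Rightarrow> 'g::linordered_ab_group_add option"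
    and S :: "('k^'n) set"
  assumes vK: "valuation vK"
    and conv: "vconvex vK S"
  shows "(0 \<in> S \<longrightarrow> (\<exists>Y. finite Y \<and> S = vconv vK Y) \<longrightarrow>
            (\<exists>B. finite B \<and> vec.independent B \<and> S = vring_span vK B))
       \<and> (\<forall>(vL :: 'l::field \<Rightarrow> 'g option) (\<iota> :: 'k \<Rightarrow> 'l).
            valuation vL \<longrightarrow> \<iota> 1 = 1 \<longrightarrow> (\<forall>x y. \<iota> (x + y) = \<iota> x + \<iota> y)
            \<longrightarrow> (\<forall>x y. \<iota> (x * y) = \<iota> x * \<iota> y) \<longrightarrow> (\<forall>x. vL (\<iota> x) = vK x) \<longrightarrow>
            {x. vmap \<iota> x \<in> vconv vL (vmap \<iota> ` S)} = S)"
proof (intro conjI allI impI)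
  assume S0: "0 \<in> S" and "\<exists>Y. finite Y \<and> S = vconv vK Y"
  then obtain Y where fY: "finite Y" and SY: "S = vconv vK Y" by blast
  have YS: "Y \<subseteq> S"
  proof
    fix y assume "y \<in> Y"
    thus "y \<in> S" unfolding SY using vconv_single vring_1[OF vK] by blast
  qed
  have "S = vring_span vK Y"
    using span_sub[OF vK conv S0 YS fY] conv_sub_span[OF vK fY] SY by blast
  moreover obtain B where "finite B" "vec.independent B" "vring_span vK B = vring_span vK Y"
    using span_reduce[OF vK fY] by blast
  ultimately show "\<exists>B. finite B \<and> vec.independent B \<and> S = vring_span vK B" by auto
next
  fix vL :: "'l::field \<Rightarrow> 'g option" and \<iota> :: "'k \<Rightarrow> 'l"
  assume vL: "valuation vL" and i1: "\<iota> 1 = 1" and iadd: "\<forall>x y. \<iota> (x + y) = \<iota> x + \<iota> y"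
    and imul: "\<forall>x y. \<iota> (x * y) = \<iota> x * \<iota> y" and iv: "\<forall>x. vL (\<iota> x) = vK x"
  note R = red[OF vK vL i1 iadd[rule_format] imul[rule_format] iv[rule_format]]
  show "{x. vmap \<iota> x \<in> vconv vL (vmap \<iota> ` S)} = S"
  proof
    show "{x. vmap \<iota> x \<in> vconv vL (vmap \<iota> ` S)} \<subseteq> S"
    proof
      fix x assume "x \<in> {x. vmap \<iota> x \<in> vconv vL (vmap \<iota> ` S)}"
      then obtain m :: nat and xs \<alpha> where h: "\<forall>i<m. xs i \<in> vmap \<iota> ` S \<and> \<alpha> i \<in> vring vL"
        and s1: "(\<Sum>i<m. \<alpha> i) = 1" and xe: "vmap \<iota> x = (\<Sum>i<m. \<alpha> i *s xs i)"
        unfolding vconv_def mem_Collect_eq by blast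
      have "\<forall>i\<in>{..<m}. \<exists>t. t \<in> S \<and> xs i = vmap \<iota> t" using h by auto
      then obtain s where s: "\<forall>i\<in>{..<m}. s i \<in> S \<and> xs i = vmap \<iota> (s i)"
        by (metis bchoice)
      have comp: "\<forall>k. \<iota> (x$k) = (\<Sum>i\<in>{..<m}. \<alpha> i * \<iota> (s i $ k))"
      proof
        fix k
        have "\<iota> (x$k) = (\<Sum>i<m. \<alpha> i * xs i $ k)" using arg_cong[OF xe, of "\<lambda>z. z $ k"] by simp
        also have "\<dots> = (\<Sum>i\<in>{..<m}. \<alpha> i * \<iota> (s i $ k))"
          by (rule sum.cong) (use s in auto)
        finally show "\<iota> (x$k) = (\<Sum>i\<in>{..<m}. \<alpha> i * \<iota> (s i $ k))" .
      qed
      obtain \<beta> where b1: "\<forall>i\<in>{..<m}. \<beta> i \<in> vring vK" and b2: "sum \<beta> {..<m} = 1"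
        and b3: "\<forall>k. x$k = (\<Sum>i\<in>{..<m}. \<beta> i * s i $ k)"
        using R[of "{..<m}" \<alpha> x s] h s1 comp by auto
      have "x = (\<Sum>i<m. \<beta> i *s s i)" using b3 by (simp add: vec_eq_iff)
      hence "x \<in> vconv vK S" using vconv_intro[of m s S \<beta> vK x] b1 b2 s by auto
      thus "x \<in> S" using conv unfolding vconvex_def by blast
    qed
  next
    show "S \<subseteq> {x. vmap \<iota> x \<in> vconv vL (vmap \<iota> ` S)}"
    proof
      fix x assume x: "x \<in> S"
      thus "x \<in> {x. vmap \<iota> x \<in> vconv vL (vmap \<iota> ` S)}" using vconv_single vring_1[OF vL] by blast
    qed
  qed
qed

end
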